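(* Let $\mathcal{A}$ and $\mathcal{U}$ be Banach algebras, let $\theta$ be a nonzero character on $\mathcal{A}$, and let $\mathcal{X}$ be a Banach $(\mathcal{A}\times_{\theta}\mathcal{U})$-bimodule, regarded also as a Banach $\mathcal{A}$-bimodule and as a Banach $\mathcal{U}$-bimodule via the induced actions described in the context. Let $D:\mathcal{A}\times_{\theta}\mathcal{U}\to\mathcal{X}$ be a linear mapping. Then the following are equivalent: (i) $D$ is a derivation; (ii) there are linear mappings $\delta_1:\mathcal{A}\to\mathcal{X}$ and $\delta_2:\mathcal{U}\to\mathcal{X}$ with $D((a,u))=\delta_1(a)+\delta_2(u)$ for all $a\in\mathcal{A},u\in\mathcal{U}$, such that $\delta_1$ and $\delta_2$ are derivations and \[a\delta_2(u)+\delta_1(a)u=\theta(a)\delta_2(u)=\delta_2(u)a+u\delta_1(a)\qquad(a\in\mathcal{A},\,u\in\mathcal{U}).\]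
   Context: For Banach algebras $\mathcal{A},\mathcal{U}$ and a nonzero character (nonzero multiplicative linear functional) $\theta$ on $\mathcal{A}$, the Lau product $\mathcal{A}\times_{\theta}\mathcal{U}$ is the Banach space $\mathcal{A}\times\mathcal{U}$ with norm $\|(a,u)\|=\|a\|+\|u\|$ and multiplication $(a,u)(a',u')=(aa',\theta(a)u'+\theta(a')u+uu')$. Given a Banach $(\mathcal{A}\times_{\theta}\mathcal{U})$-bimodule $\mathcal{X}$, it is a Banach $\mathcal{A}$-bimodule via $a x=(a,0)x$, $xa=x(a,0)$, and a Banach $\mathcal{U}$-bimodule via $ux=(0,u)x$, $xu=x(0,u)$. A derivation from a Banach algebra $\mathcal{B}$ into a Banach $\mathcal{B}$-bimodule $\mathcal{Y}$ is a linear map $\delta$ with $\delta(bc)=b\delta(c)+\delta(b)c$. *)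

theory Defs
  imports Complex_Main "HOL-Library.Product_Plus"
begin

definition cplx_banach_space :: "(complex \<Rightarrow> 'a::banach \<Rightarrow> 'a) \<Rightarrow> bool" where
  "cplx_banach_space s \<longleftrightarrow> vector_space s
     \<and> (\<forall>r x. s (complex_of_real r) x = scaleR r x)
     \<and> (\<forall>c x. norm (s c x) = cmod c * norm x)"

text \<open>Complex Banach algebras (submultiplicative complete norm from the type class).\<close>
definition cplx_banach_algebra :: "(complex \<Rightarrow> 'a::{banach,real_normed_algebra} \<Rightarrow> 'a) \<Rightarrow> bool" where
  "cplx_banach_algebra s \<longleftrightarrow> cplx_banach_space s
     \<and> (\<forall>c x y. s c (x * y) = s c x * y \<and> s c (x * y) = x * s c y)"

text \<open>Character: multiplicative linear functional (nonzero-ness stated separately).\<close>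
definition is_character :: "(complex \<Rightarrow> 'a::ring \<Rightarrow> 'a) \<Rightarrow> ('a \<Rightarrow> complex) \<Rightarrow> bool" where
  "is_character s \<theta> \<longleftrightarrow> Vector_Spaces.linear s (*) \<theta> \<and> (\<forall>a b. \<theta> (a * b) = \<theta> a * \<theta> b)"

definition lau_scale :: "(complex \<Rightarrow> 'a \<Rightarrow> 'a) \<Rightarrow> (complex \<Rightarrow> 'u \<Rightarrow> 'u) \<Rightarrow> complex \<Rightarrow> 'a \<times> 'u \<Rightarrow> 'a \<times> 'u" where
  "lau_scale sA sU c p = (sA c (fst p), sU c (snd p))"

definition lau_mult :: "(complex \<Rightarrow> 'u::ring \<Rightarrow> 'u) \<Rightarrow> ('a::ring \<Rightarrow> complex) \<Rightarrow> 'a \<times> 'u \<Rightarrow> 'a \<times> 'u \<Rightarrow> 'a \<times> 'u" where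
  "lau_mult sU \<theta> p q = (fst p * fst q,
      sU (\<theta> (fst p)) (snd q) + sU (\<theta> (fst q)) (snd p) + snd p * snd q)"

definition lau_norm :: "'a::real_normed_vector \<times> 'u::real_normed_vector \<Rightarrow> real" where
  "lau_norm p = norm (fst p) + norm (snd p)"

definition banach_bimodule ::
  "(complex \<Rightarrow> 'b::ab_group_add \<Rightarrow> 'b) \<Rightarrow> ('b \<Rightarrow> 'b \<Rightarrow> 'b) \<Rightarrow> ('b \<Rightarrow> real) \<Rightarrow>
   (complex \<Rightarrow> 'x::banach \<Rightarrow> 'x) \<Rightarrow> ('b \<Rightarrow> 'x \<Rightarrow> 'x) \<Rightarrow> ('x \<Rightarrow> 'b \<Rightarrow> 'x) \<Rightarrow> bool" where
  "banach_bimodule sB mB nB sX lact ract \<longleftrightarrow>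
     cplx_banach_space sX
   \<and> (\<forall>b. Vector_Spaces.linear sX sX (lact b)) \<and> (\<forall>x. Vector_Spaces.linear sB sX (\<lambda>b. lact b x))
   \<and> (\<forall>b. Vector_Spaces.linear sX sX (\<lambda>x. ract x b)) \<and> (\<forall>x. Vector_Spaces.linear sB sX (ract x))
   \<and> (\<forall>b c x. lact (mB b c) x = lact b (lact c x))
   \<and> (\<forall>b c x. ract x (mB b c) = ract (ract x b) c)
   \<and> (\<forall>b c x. ract (lact b x) c = lact b (ract x c))
   \<and> (\<exists>K. \<forall>b x. norm (lact b x) \<le> K * nB b * norm x \<and> norm (ract x b) \<le> K * norm x * nB b)"

definition is_derivation ::
  "('b \<Rightarrow> 'b \<Rightarrow> 'b) \<Rightarrow> ('b \<Rightarrow> 'x::plus \<Rightarrow> 'x) \<Rightarrow> ('x \<Rightarrow> 'b \<Rightarrow> 'x) \<Rightarrow> ('b \<Rightarrow> 'x) \<Rightarrow> bool" where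
  "is_derivation mB lact ract d \<longleftrightarrow> (\<forall>b c. d (mB b c) = lact b (d c) + ract (d b) c)"

end

theory Submission
  imports Defs
begin

theorem theorem2p1:
  fixes sA :: "complex \<Rightarrow> 'a::{banach,real_normed_algebra} \<Rightarrow> 'a"
    and sU :: "complex \<Rightarrow> 'u::{banach,real_normed_algebra} \<Rightarrow> 'u"
    and sX :: "complex \<Rightarrow> 'x::banach \<Rightarrow> 'x"
    and \<theta> :: "'a \<Rightarrow> complex"
    and lm :: "'a \<times> 'u \<Rightarrow> 'x \<Rightarrow> 'x" and rm :: "'x \<Rightarrow> 'a \<times> 'u \<Rightarrow> 'x"
    and D :: "'a \<times> 'u \<Rightarrow> 'x"
  assumes A: "cplx_banach_algebra sA"
    and U: "cplx_banach_algebra sU"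
    and chr: "is_character sA \<theta>" and nz: "\<theta> \<noteq> (\<lambda>_. 0)"
    and X: "banach_bimodule (lau_scale sA sU) (lau_mult sU \<theta>) lau_norm sX lm rm"
    and linD: "Vector_Spaces.linear (lau_scale sA sU) sX D"
  shows "is_derivation (lau_mult sU \<theta>) lm rm D \<longleftrightarrow>
    (\<exists>\<delta>1 \<delta>2. Vector_Spaces.linear sA sX \<delta>1 \<and> Vector_Spaces.linear sU sX \<delta>2
       \<and> (\<forall>a u. D (a, u) = \<delta>1 a + \<delta>2 u)
       \<and> is_derivation (*) (\<lambda>a x. lm (a, 0) x) (\<lambda>x a. rm x (a, 0)) \<delta>1
       \<and> is_derivation (*) (\<lambda>u x. lm (0, u) x) (\<lambda>x u. rm x (0, u)) \<delta>2
       \<and> (\<forall>a u. lm (a, 0) (\<delta>2 u) + rm (\<delta>1 a) (0, u) = sX (\<theta> a) (\<delta>2 u)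
              \<and> sX (\<theta> a) (\<delta>2 u) = rm (\<delta>2 u) (a, 0) + lm (0, u) (\<delta>1 a)))"
proof -
  have vA: "vector_space sA" using A unfolding cplx_banach_algebra_def cplx_banach_space_def by blast
  have vU: "vector_space sU" using U unfolding cplx_banach_algebra_def cplx_banach_space_def by blast
  have vX: "vector_space sX" using X unfolding banach_bimodule_def cplx_banach_space_def by blast
  have vL: "vector_space (lau_scale sA sU)" using linD unfolding Vector_Spaces.linear_iff by blast
  have sA0: "\<And>c. sA c 0 = 0" using vA by (simp add: module.scale_zero_right module_iff_vector_space)
  have sU0: "\<And>c. sU c 0 = 0" using vU by (simp add: module.scale_zero_right module_iff_vector_space)
  have Dadd: "\<And>p q. D (p + q) = D p + D q" and Dsc: "\<And>c p. D (lau_scale sA sU c p) = sX c (D p)"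
    using linD unfolding Vector_Spaces.linear_iff by auto
  have th0: "\<theta> 0 = 0" using chr unfolding is_character_def
    by (metis Vector_Spaces.linear_iff module_hom.zero module_hom_iff_linear)
  have lmL: "\<And>p x y. lm p (x + y) = lm p x + lm p y"
    using X unfolding banach_bimodule_def Vector_Spaces.linear_iff by auto
  have lmR: "\<And>p q x. lm (p + q) x = lm p x + lm q x"
    using X unfolding banach_bimodule_def Vector_Spaces.linear_iff by auto
  have rmL: "\<And>p x y. rm (x + y) p = rm x p + rm y p"
    using X unfolding banach_bimodule_def Vector_Spaces.linear_iff by auto
  have rmR: "\<And>p q x. rm x (p + q) = rm x p + rm x q"
    using X unfolding banach_bimodule_def Vector_Spaces.linear_iff by auto
  have split: "\<And>a (u::'u). (a, u) = (a, 0) + (0::'a, u)" by simp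
  have lmS: "\<And>a u x. lm (a, u) x = lm (a, 0) x + lm (0, u) x" by (metis split lmR)
  have rmS: "\<And>a u x. rm x (a, u) = rm x (a, 0) + rm x (0, u)" by (metis split rmR)
  have m1: "\<And>a b. lau_mult sU \<theta> (a, 0) (b, 0) = (a * b, 0)" by (simp add: lau_mult_def sU0)
  have m2: "\<And>u v. lau_mult sU \<theta> (0, u) (0, v) = (0, u * v)" by (simp add: lau_mult_def th0 vU module.scale_zero_left module_iff_vector_space)
  have m3: "\<And>a u. lau_mult sU \<theta> (a, 0) (0, u) = (0, sU (\<theta> a) u)" by (simp add: lau_mult_def th0 sU0)
  have m4: "\<And>a u. lau_mult sU \<theta> (0, u) (a, 0) = (0, sU (\<theta> a) u)" by (simp add: lau_mult_def th0 sU0)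
  have D1sc: "\<And>c a. D (sA c a, 0) = sX c (D (a, 0))" by (metis Dsc lau_scale_def fst_conv snd_conv sU0)
  have D2sc: "\<And>c u. D (0, sU c u) = sX c (D (0, u))" by (metis Dsc lau_scale_def fst_conv snd_conv sA0)
  show ?thesis
  proof
    assume der: "is_derivation (lau_mult sU \<theta>) lm rm D"
    have d: "\<And>p q. D (lau_mult sU \<theta> p q) = lm p (D q) + rm (D p) q"
      using der unfolding is_derivation_def by blast
    show "\<exists>\<delta>1 \<delta>2. Vector_Spaces.linear sA sX \<delta>1 \<and> Vector_Spaces.linear sU sX \<delta>2
       \<and> (\<forall>a u. D (a, u) = \<delta>1 a + \<delta>2 u)
       \<and> is_derivation (*) (\<lambda>a x. lm (a, 0) x) (\<lambda>x a. rm x (a, 0)) \<delta>1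
       \<and> is_derivation (*) (\<lambda>u x. lm (0, u) x) (\<lambda>x u. rm x (0, u)) \<delta>2
       \<and> (\<forall>a u. lm (a, 0) (\<delta>2 u) + rm (\<delta>1 a) (0, u) = sX (\<theta> a) (\<delta>2 u)
              \<and> sX (\<theta> a) (\<delta>2 u) = rm (\<delta>2 u) (a, 0) + lm (0, u) (\<delta>1 a))"
    proof (intro exI conjI allI)
      show "Vector_Spaces.linear sA sX (\<lambda>a. D (a, 0))"
        unfolding Vector_Spaces.linear_iff using vA vX D1sc by (auto simp: Dadd[symmetric])
      show "Vector_Spaces.linear sU sX (\<lambda>u. D (0, u))"
        unfolding Vector_Spaces.linear_iff using vU vX D2sc by (auto simp: Dadd[symmetric])
      fix a u
      show "D (a, u) = D (a, 0) + D (0, u)" by (metis split Dadd)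
      show "lm (a, 0) (D (0, u)) + rm (D (a, 0)) (0, u) = sX (\<theta> a) (D (0, u))"
        using d[of "(a,0)" "(0,u)"] by (simp add: m3 D2sc)
      show "sX (\<theta> a) (D (0, u)) = rm (D (0, u)) (a, 0) + lm (0, u) (D (a, 0))"
        using d[of "(0,u)" "(a,0)"] by (simp add: m4 D2sc add.commute)
    next
      show "is_derivation (*) (\<lambda>a x. lm (a, 0) x) (\<lambda>x a. rm x (a, 0)) (\<lambda>a. D (a, 0))"
        unfolding is_derivation_def using d m1 by metis
      show "is_derivation (*) (\<lambda>u x. lm (0, u) x) (\<lambda>x u. rm x (0, u)) (\<lambda>u. D (0, u))"
        unfolding is_derivation_def using d m2 by metis
    qed
  next
    assume "\<exists>\<delta>1 \<delta>2. Vector_Spaces.linear sA sX \<delta>1 \<and> Vector_Spaces.linear sU sX \<delta>2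
       \<and> (\<forall>a u. D (a, u) = \<delta>1 a + \<delta>2 u)
       \<and> is_derivation (*) (\<lambda>a x. lm (a, 0) x) (\<lambda>x a. rm x (a, 0)) \<delta>1
       \<and> is_derivation (*) (\<lambda>u x. lm (0, u) x) (\<lambda>x u. rm x (0, u)) \<delta>2
       \<and> (\<forall>a u. lm (a, 0) (\<delta>2 u) + rm (\<delta>1 a) (0, u) = sX (\<theta> a) (\<delta>2 u)
              \<and> sX (\<theta> a) (\<delta>2 u) = rm (\<delta>2 u) (a, 0) + lm (0, u) (\<delta>1 a))"
    then obtain \<delta>1 \<delta>2 where l1: "Vector_Spaces.linear sA sX \<delta>1" and l2: "Vector_Spaces.linear sU sX \<delta>2"
      and Dd: "\<And>a u. D (a, u) = \<delta>1 a + \<delta>2 u"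
      and d1: "\<And>a b. \<delta>1 (a * b) = lm (a, 0) (\<delta>1 b) + rm (\<delta>1 a) (b, 0)"
      and d2: "\<And>u v. \<delta>2 (u * v) = lm (0, u) (\<delta>2 v) + rm (\<delta>2 u) (0, v)"
      and c1: "\<And>a u. lm (a, 0) (\<delta>2 u) + rm (\<delta>1 a) (0, u) = sX (\<theta> a) (\<delta>2 u)"
      and c2: "\<And>a u. sX (\<theta> a) (\<delta>2 u) = rm (\<delta>2 u) (a, 0) + lm (0, u) (\<delta>1 a)"
      unfolding is_derivation_def by blast
    have a2: "\<And>u v. \<delta>2 (u + v) = \<delta>2 u + \<delta>2 v" and s2: "\<And>c u. \<delta>2 (sU c u) = sX c (\<delta>2 u)"
      using l2 unfolding Vector_Spaces.linear_iff by auto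
    show "is_derivation (lau_mult sU \<theta>) lm rm D"
      unfolding is_derivation_def
    proof (intro allI)
      fix p q :: "'a \<times> 'u"
      obtain a u where p: "p = (a, u)" by fastforce
      obtain b v where q: "q = (b, v)" by fastforce
      have "D (lau_mult sU \<theta> p q) = \<delta>1 (a * b) + (sX (\<theta> a) (\<delta>2 v) + sX (\<theta> b) (\<delta>2 u) + \<delta>2 (u * v))"
        by (simp add: p q lau_mult_def Dd a2 s2)
      also have "\<dots> = (lm (a, 0) (\<delta>1 b) + rm (\<delta>1 a) (b, 0)) +
          ((lm (a, 0) (\<delta>2 v) + rm (\<delta>1 a) (0, v)) + (rm (\<delta>2 u) (b, 0) + lm (0, u) (\<delta>1 b))
           + (lm (0, u) (\<delta>2 v) + rm (\<delta>2 u) (0, v)))"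
        by (simp add: d1 d2 c1 c2)
      also have "\<dots> = lm p (D q) + rm (D p) q"
      proof -
        have e1: "lm p (D q) = lm (a, 0) (\<delta>1 b) + lm (a, 0) (\<delta>2 v) + (lm (0, u) (\<delta>1 b) + lm (0, u) (\<delta>2 v))"
          unfolding p q Dd lmS[of a u] lmL by (simp only: ac_simps)
        have e2: "rm (D p) q = rm (\<delta>1 a) (b, 0) + rm (\<delta>1 a) (0, v) + (rm (\<delta>2 u) (b, 0) + rm (\<delta>2 u) (0, v))"
          unfolding p q Dd rmS[where a=b and u=v] rmL by (simp only: ac_simps)
        show ?thesis unfolding e1 e2 by (simp only: ac_simps)
      qed
      finally show "D (lau_mult sU \<theta> p q) = lm p (D q) + rm (D p) q" .
    qed
  qed
qed

end
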